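(* Let $p\in[1,\infty]$ and let $\{E_i\}_{i\in I}$ be a nonempty family of locally convex spaces. (i) If $I=\omega$ is countable, then the topological product $\prod_{i\in\omega}E_i$ has the $wCSP_p$ if and only if every $E_i$ has the $wCSP_p$. (ii) The locally convex direct sum $\bigoplus_{i\in I}E_i$ has the $wCSP_p$ if and only if every $E_i$ has the $wCSP_p$.
   Context: Locally convex spaces are Hausdorff over $\mathbb R$ or $\mathbb C$. For $p\in[1,\infty]$, a sequence $(x_n)$ in a locally convex space $E$ is weakly $p$-summable if for every $\chi\in E'$ the sequence $(\chi(x_n))_n$ lies in $\ell_p$ (if $p<\infty$) or in $c_0$ (if $p=\infty$). A sequence $(x_n)$ is weakly $p$-Cauchy if for every pair of strictly increasing sequences $(k_n),(j_n)$ in $\omega$ the sequence $(x_{k_n}-x_{j_n})_n$ is weakly $p$-summable. $E$ has the weak Cauchy subsequence property of order $p$ ($wCSP_p$) if every bounded sequence in $E$ has a weakly $p$-Cauchy subsequence. *)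

theory Defs
  imports "HOL-Analysis.Analysis" "HOL-Library.Function_Algebras"
begin

text \<open>Scalars: a type of class real_normed_field that is also a finite-dimensional
  Euclidean space over the reals, i.e. (up to isometric isomorphism) the real or the
  complex numbers.  A space is a linear subspace V of an ambient additive group 'a,
  with scalar multiplication sc, and its locally convex topology is given by a
  family P of seminorms.\<close>

definition lin_space :: "('k::field \<Rightarrow> 'a::ab_group_add \<Rightarrow> 'a) \<Rightarrow> 'a set \<Rightarrow> bool" where
  "lin_space sc V \<longleftrightarrow> 0 \<in> V \<and> (\<forall>x\<in>V. \<forall>y\<in>V. x + y \<in> V) \<and> (\<forall>c. \<forall>x\<in>V. sc c x \<in> V)
     \<and> (\<forall>a. \<forall>x\<in>V. \<forall>y\<in>V. sc a (x + y) = sc a x + sc a y)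
     \<and> (\<forall>a b. \<forall>x\<in>V. sc (a + b) x = sc a x + sc b x)
     \<and> (\<forall>a b. \<forall>x\<in>V. sc a (sc b x) = sc (a * b) x)
     \<and> (\<forall>x\<in>V. sc 1 x = x)"

definition seminorm_on :: "('k::real_normed_field \<Rightarrow> 'a::ab_group_add \<Rightarrow> 'a) \<Rightarrow> 'a set \<Rightarrow> ('a \<Rightarrow> real) \<Rightarrow> bool" where
  "seminorm_on sc V q \<longleftrightarrow> (\<forall>x\<in>V. \<forall>y\<in>V. q (x + y) \<le> q x + q y)
     \<and> (\<forall>c. \<forall>x\<in>V. q (sc c x) = norm c * q x)"

definition lcs :: "('k::real_normed_field \<Rightarrow> 'a::ab_group_add \<Rightarrow> 'a) \<Rightarrow> 'a set \<Rightarrow> ('a \<Rightarrow> real) set \<Rightarrow> bool" where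
  "lcs sc V P \<longleftrightarrow> lin_space sc V \<and> (\<forall>q\<in>P. seminorm_on sc V q)
     \<and> (\<forall>x\<in>V. x \<noteq> 0 \<longrightarrow> (\<exists>q\<in>P. q x \<noteq> 0))"

text \<open>Topological dual: continuous linear functionals (continuity w.r.t. the
  topology generated by P, i.e. domination by finitely many seminorms of P).\<close>
definition dual :: "('k::real_normed_field \<Rightarrow> 'a::ab_group_add \<Rightarrow> 'a) \<Rightarrow> 'a set \<Rightarrow> ('a \<Rightarrow> real) set \<Rightarrow> ('a \<Rightarrow> 'k) set" where
  "dual sc V P = {f. (\<forall>x\<in>V. \<forall>y\<in>V. f (x + y) = f x + f y)
     \<and> (\<forall>c. \<forall>x\<in>V. f (sc c x) = c * f x)
     \<and> (\<exists>F C. F \<subseteq> P \<and> finite F \<and> (\<forall>x\<in>V. norm (f x) \<le> C * (\<Sum>q\<in>F. q x)))}"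

definition lcs_bounded :: "('a \<Rightarrow> real) set \<Rightarrow> 'a set \<Rightarrow> bool" where
  "lcs_bounded P B \<longleftrightarrow> (\<forall>q\<in>P. bdd_above (q ` B))"

text \<open>Scalar sequences in ell_p (p finite) or c_0 (p = infinity).\<close>
definition in_lp :: "ereal \<Rightarrow> (nat \<Rightarrow> 'k::real_normed_field) \<Rightarrow> bool" where
  "in_lp p a \<longleftrightarrow> (if p = \<infinity> then a \<longlonglongrightarrow> 0
                   else summable (\<lambda>n. norm (a n) powr real_of_ereal p))"

definition weakly_p_summable ::
  "ereal \<Rightarrow> ('k::real_normed_field \<Rightarrow> 'a::ab_group_add \<Rightarrow> 'a) \<Rightarrow> 'a set \<Rightarrow> ('a \<Rightarrow> real) set \<Rightarrow> (nat \<Rightarrow> 'a) \<Rightarrow> bool" where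
  "weakly_p_summable p sc V P x \<longleftrightarrow> (\<forall>n. x n \<in> V) \<and> (\<forall>f\<in>dual sc V P. in_lp p (\<lambda>n. f (x n)))"

definition weakly_p_Cauchy ::
  "ereal \<Rightarrow> ('k::real_normed_field \<Rightarrow> 'a::ab_group_add \<Rightarrow> 'a) \<Rightarrow> 'a set \<Rightarrow> ('a \<Rightarrow> real) set \<Rightarrow> (nat \<Rightarrow> 'a) \<Rightarrow> bool" where
  "weakly_p_Cauchy p sc V P x \<longleftrightarrow>
     (\<forall>k j. strict_mono k \<and> strict_mono j \<longrightarrow> weakly_p_summable p sc V P (\<lambda>n. x (k n) - x (j n)))"

definition wCSP ::
  "ereal \<Rightarrow> ('k::real_normed_field \<Rightarrow> 'a::ab_group_add \<Rightarrow> 'a) \<Rightarrow> 'a set \<Rightarrow> ('a \<Rightarrow> real) set \<Rightarrow> bool" where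
  "wCSP p sc V P \<longleftrightarrow> (\<forall>x::nat \<Rightarrow> 'a. (\<forall>n. x n \<in> V) \<and> lcs_bounded P (range x) \<longrightarrow>
      (\<exists>r::nat \<Rightarrow> nat. strict_mono r \<and> weakly_p_Cauchy p sc V P (x \<circ> r)))"

definition fam_sc :: "'i set \<Rightarrow> ('i \<Rightarrow> 'k \<Rightarrow> 'a::ab_group_add \<Rightarrow> 'a) \<Rightarrow> 'k \<Rightarrow> ('i \<Rightarrow> 'a) \<Rightarrow> ('i \<Rightarrow> 'a)" where
  "fam_sc I sc c x = (\<lambda>i. if i \<in> I then sc i c (x i) else 0)"

text \<open>Topological product over I (coordinates outside I are 0): the product topology
  is generated by the seminorms q(x_i), q in P_i.\<close>
definition prod_V :: "'i set \<Rightarrow> ('i \<Rightarrow> 'a::ab_group_add set) \<Rightarrow> ('i \<Rightarrow> 'a) set" where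
  "prod_V I V = {x. (\<forall>i\<in>I. x i \<in> V i) \<and> (\<forall>i. i \<notin> I \<longrightarrow> x i = 0)}"

definition prod_P :: "'i set \<Rightarrow> ('i \<Rightarrow> ('a \<Rightarrow> real) set) \<Rightarrow> (('i \<Rightarrow> 'a) \<Rightarrow> real) set" where
  "prod_P I P = {(\<lambda>x. q (x i)) | i q. i \<in> I \<and> q \<in> P i}"

definition sum_V :: "'i set \<Rightarrow> ('i \<Rightarrow> 'a::ab_group_add set) \<Rightarrow> ('i \<Rightarrow> 'a) set" where
  "sum_V I V = {x. x \<in> prod_V I V \<and> finite {i. x i \<noteq> 0}}"

definition inj_sum :: "'i \<Rightarrow> 'a::ab_group_add \<Rightarrow> ('i \<Rightarrow> 'a)" where
  "inj_sum i v = (\<lambda>j. if j = i then v else 0)"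

text \<open>Locally convex direct sum: the finest locally convex topology making all canonical
  injections continuous; its continuous seminorms are exactly the seminorms q on the sum
  such that each q o inj_i is continuous on E_i.\<close>
definition sum_P :: "'i set \<Rightarrow> ('i \<Rightarrow> 'k::real_normed_field \<Rightarrow> 'a::ab_group_add \<Rightarrow> 'a) \<Rightarrow>
    ('i \<Rightarrow> 'a set) \<Rightarrow> ('i \<Rightarrow> ('a \<Rightarrow> real) set) \<Rightarrow> (('i \<Rightarrow> 'a) \<Rightarrow> real) set" where
  "sum_P I sc V P = {q. seminorm_on (fam_sc I sc) (sum_V I V) q \<and>
     (\<forall>i\<in>I. \<exists>F C. F \<subseteq> P i \<and> finite F \<and> (\<forall>v\<in>V i. q (inj_sum i v) \<le> C * (\<Sum>p\<in>F. p v)))}"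

end

theory Submission
  imports Defs "HOL-Library.Diagonal_Subsequence"
begin

lemma ls_sc0: assumes "lin_space sc V" "x \<in> V" shows "sc 0 x = 0"
proof -
  have "sc (0+0) x = sc 0 x + sc 0 x" using assms unfolding lin_space_def by blast
  then show ?thesis by simp
qed

lemma ls_sc_zero: assumes "lin_space sc V" shows "sc c 0 = 0"
proof -
  have "0 \<in> V" using assms unfolding lin_space_def by blast
  then have "sc c (0+0) = sc c 0 + sc c 0" using assms unfolding lin_space_def by blast
  then show ?thesis by simp
qed

lemma ls_neg: assumes "lin_space sc V" "x \<in> V" shows "sc (-1) x = - x"
proof -
  have "sc (1 + -1) x = sc 1 x + sc (-1) x" using assms unfolding lin_space_def by blast
  moreover have "sc 1 x = x" using assms unfolding lin_space_def by blast
  ultimately have "0 = x + sc (-1) x" using ls_sc0[OF assms] by simp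
  then show ?thesis by (metis add.commute add_eq_0_iff)
qed

lemma ls_diff: assumes "lin_space sc V" "x \<in> V" "y \<in> V" shows "x - y \<in> V"
proof -
  have "sc (-1) y \<in> V" using assms unfolding lin_space_def by blast
  then have "x + sc (-1) y \<in> V" using assms unfolding lin_space_def by blast
  then show ?thesis using ls_neg[OF assms(1,3)] by simp
qed

lemma sn_zero: assumes "lin_space sc V" "seminorm_on sc V q" shows "q 0 = 0"
proof -
  have "0 \<in> V" using assms unfolding lin_space_def by blast
  then have "q (sc 0 0) = norm (0::'a) * q 0" using assms unfolding seminorm_on_def by blast
  then show ?thesis using ls_sc0[OF assms(1) \<open>0 \<in> V\<close>] by simp
qed

lemma sn_nonneg: assumes "lin_space sc V" "seminorm_on sc V q" "x \<in> V" shows "q x \<ge> 0"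
proof -
  have "q (sc (-1) x) = norm (-1::'a) * q x" using assms unfolding seminorm_on_def by blast
  then have e: "q (- x) = q x" using ls_neg[OF assms(1,3)] by simp
  have "-x \<in> V" using ls_diff[OF assms(1) _ assms(3)] assms(1) unfolding lin_space_def
    by (metis diff_0)
  then have "q (x + - x) \<le> q x + q (-x)" using assms unfolding seminorm_on_def by blast
  then show ?thesis using e sn_zero[OF assms(1,2)] by simp
qed

lemma lcs_nonneg: "lcs sc V P \<Longrightarrow> q \<in> P \<Longrightarrow> x \<in> V \<Longrightarrow> q x \<ge> 0"
  unfolding lcs_def using sn_nonneg by blast

lemma lcs_zero: "lcs sc V P \<Longrightarrow> q \<in> P \<Longrightarrow> q 0 = 0"
  unfolding lcs_def using sn_zero by blast

lemma dual_add: "f \<in> dual sc V P \<Longrightarrow> x \<in> V \<Longrightarrow> y \<in> V \<Longrightarrow> f (x + y) = f x + f y"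
  unfolding dual_def by blast

lemma dual_zero: assumes "f \<in> dual sc V P" "lin_space sc V" shows "f 0 = 0"
proof -
  have "0 \<in> V" using assms unfolding lin_space_def by blast
  then have "f (0 + 0) = f 0 + f 0" using dual_add[OF assms(1)] by blast
  then show ?thesis by simp
qed

lemma dual_diff: assumes "f \<in> dual sc V P" "lin_space sc V" "x \<in> V" "y \<in> V"
  shows "f (x - y) = f x - f y"
proof -
  have "x - y \<in> V" using ls_diff assms by blast
  then have "f ((x - y) + y) = f (x - y) + f y" using dual_add[OF assms(1)] assms by blast
  then show ?thesis by (simp add: algebra_simps)
qed

lemma sum_sn_nonneg: fixes P :: "('a \<Rightarrow> real) set" assumes "F \<subseteq> P" "\<forall>q\<in>P. \<forall>x\<in>V. q x \<ge> 0" "x \<in> V"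
  shows "(\<Sum>q\<in>F. q x) \<ge> 0"
proof (rule sum_nonneg)
  fix q assume "q \<in> F" then show "0 \<le> q x" using assms by blast
qed

lemma dual_bound: assumes "f \<in> dual sc V P" "\<forall>q\<in>P. \<forall>x\<in>V. q x \<ge> 0"
  shows "\<exists>F C. F \<subseteq> P \<and> finite F \<and> C \<ge> 0 \<and> (\<forall>x\<in>V. norm (f x) \<le> C * (\<Sum>q\<in>F. q x))"
proof -
  obtain F C where F: "F \<subseteq> P" "finite F" "\<forall>x\<in>V. norm (f x) \<le> C * (\<Sum>q\<in>F. q x)"
    using assms(1) unfolding dual_def by blast
  have "\<forall>x\<in>V. norm (f x) \<le> max C 0 * (\<Sum>q\<in>F. q x)"
  proof
    fix x assume x: "x \<in> V"
    have "(\<Sum>q\<in>F. q x) \<ge> 0" using sum_sn_nonneg[OF F(1) assms(2) x] .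
    then have "C * (\<Sum>q\<in>F. q x) \<le> max C 0 * (\<Sum>q\<in>F. q x)" by (intro mult_right_mono) auto
    then show "norm (f x) \<le> max C 0 * (\<Sum>q\<in>F. q x)" using F(3) x by force
  qed
  then show ?thesis using F by (intro exI[of _ F] exI[of _ "max C 0"]) auto
qed

lemma combine_bound: fixes P :: "('v \<Rightarrow> real) set"
  assumes A: "finite A"
    and nn: "\<forall>q\<in>P. \<forall>x\<in>V. q x \<ge> 0"
    and h: "\<forall>a\<in>A. \<exists>F C. F \<subseteq> P \<and> finite F \<and> (\<forall>v\<in>V. h a v \<le> C * (\<Sum>q\<in>F. q v))"
  shows "\<exists>F C. F \<subseteq> P \<and> finite F \<and> C \<ge> 0 \<and> (\<forall>v\<in>V. (\<Sum>a\<in>A. h a v) \<le> C * (\<Sum>q\<in>F. q v))"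
proof -
  obtain FF CC where FC: "\<forall>a\<in>A. FF a \<subseteq> P \<and> finite (FF a) \<and> (\<forall>v\<in>V. h a v \<le> CC a * (\<Sum>q\<in>FF a. q v))"
    using h by metis
  define F where "F = (\<Union>a\<in>A. FF a)"
  define C where "C = (\<Sum>a\<in>A. max (CC a) 0)"
  have F: "F \<subseteq> P" "finite F" using FC A unfolding F_def by auto
  have "\<forall>v\<in>V. (\<Sum>a\<in>A. h a v) \<le> C * (\<Sum>q\<in>F. q v)"
  proof
    fix v assume v: "v \<in> V"
    have s0: "(\<Sum>q\<in>F. q v) \<ge> 0" using sum_sn_nonneg[OF F(1) nn v] .
    have "(\<Sum>a\<in>A. h a v) \<le> (\<Sum>a\<in>A. max (CC a) 0 * (\<Sum>q\<in>F. q v))"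
    proof (rule sum_mono)
      fix a assume a: "a \<in> A"
      have s1: "(\<Sum>q\<in>FF a. q v) \<ge> 0" using sum_sn_nonneg[of "FF a" P V] FC a nn v by blast
      have s2: "(\<Sum>q\<in>FF a. q v) \<le> (\<Sum>q\<in>F. q v)"
        using F FC a nn v unfolding F_def by (intro sum_mono2) auto
      have "h a v \<le> CC a * (\<Sum>q\<in>FF a. q v)" using FC a v by blast
      also have "\<dots> \<le> max (CC a) 0 * (\<Sum>q\<in>FF a. q v)" using s1 by (intro mult_right_mono) auto
      also have "\<dots> \<le> max (CC a) 0 * (\<Sum>q\<in>F. q v)" using s2 by (intro mult_left_mono) auto
      finally show "h a v \<le> max (CC a) 0 * (\<Sum>q\<in>F. q v)" .
    qed
    also have "\<dots> = C * (\<Sum>q\<in>F. q v)" unfolding C_def by (simp add: sum_distrib_right)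
    finally show "(\<Sum>a\<in>A. h a v) \<le> C * (\<Sum>q\<in>F. q v)" .
  qed
  moreover have "C \<ge> 0" unfolding C_def by (intro sum_nonneg) auto
  ultimately show ?thesis using F by blast
qed


lemma p_real: assumes "1 \<le> p" "p \<noteq> \<infinity>" shows "real_of_ereal p \<ge> 1"
  using assms by (cases p) auto

lemma powr_add_bound:
  fixes a b :: "'k::real_normed_field" assumes r: "r > 0"
  shows "norm (a + b) powr r \<le> 2 powr r * (norm a powr r + norm b powr r)"
proof -
  define m where "m = max (norm a) (norm b)"
  have "norm (a + b) \<le> 2 * m" unfolding m_def using norm_triangle_ineq[of a b] by linarith
  then have "norm (a + b) powr r \<le> (2 * m) powr r" using r by (simp add: powr_mono2)
  also have "\<dots> = 2 powr r * m powr r" unfolding m_def by (simp add: powr_mult)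
  also have "\<dots> \<le> 2 powr r * (norm a powr r + norm b powr r)"
    unfolding m_def by (auto simp: max_def)
  finally show ?thesis .
qed

lemma in_lp_zero: "in_lp p (\<lambda>n. 0)"
  unfolding in_lp_def by auto

lemma in_lp_add: assumes p: "1 \<le> p" and a: "in_lp p a" and b: "in_lp p b"
  shows "in_lp p (\<lambda>n. a n + b n)"
proof (cases "p = \<infinity>")
  case True
  then show ?thesis using a b unfolding in_lp_def by (auto intro: tendsto_add_zero)
next
  case False
  define r where "r = real_of_ereal p"
  have r: "r > 0" using p_real[OF p False] unfolding r_def by simp
  have sa: "summable (\<lambda>n. norm (a n) powr r)" and sb: "summable (\<lambda>n. norm (b n) powr r)"
    using a b False unfolding in_lp_def r_def by auto
  have "summable (\<lambda>n. 2 powr r * (norm (a n) powr r + norm (b n) powr r))"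
    using sa sb by (intro summable_mult summable_add)
  then have "summable (\<lambda>n. norm (a n + b n) powr r)"
    by (rule summable_comparison_test') (use powr_add_bound[OF r] in auto)
  then show ?thesis using False unfolding in_lp_def r_def by auto
qed

lemma in_lp_sum: assumes p: "1 \<le> p" and J: "finite J" and a: "\<forall>j\<in>J. in_lp p (a j)"
  shows "in_lp p (\<lambda>n. \<Sum>j\<in>J. a j n)"
  using J a
proof (induction J rule: finite_induct)
  case empty then show ?case using in_lp_zero by simp
next
  case (insert j J)
  then show ?case using in_lp_add[OF p, of "a j" "\<lambda>n. \<Sum>j\<in>J. a j n"] by simp
qed

lemma in_lp_shift: assumes "in_lp p (\<lambda>n. a (n + m))" shows "in_lp p a"
proof (cases "p = \<infinity>")
  case True
  then show ?thesis using assms unfolding in_lp_def by (auto intro: LIMSEQ_offset)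
next
  case False
  then show ?thesis using assms unfolding in_lp_def
    using summable_iff_shift[of "\<lambda>n. norm (a n) powr real_of_ereal p" m] by auto
qed

lemma wpC_subseq: assumes "weakly_p_Cauchy p sc V P x" "strict_mono r"
  shows "weakly_p_Cauchy p sc V P (x \<circ> r)"
  unfolding weakly_p_Cauchy_def
proof (intro allI impI)
  fix k j :: "nat \<Rightarrow> nat" assume "strict_mono k \<and> strict_mono j"
  then have "strict_mono (r \<circ> k)" "strict_mono (r \<circ> j)" using assms(2) strict_mono_o by auto
  then have "weakly_p_summable p sc V P (\<lambda>n. x ((r \<circ> k) n) - x ((r \<circ> j) n))"
    using assms(1) unfolding weakly_p_Cauchy_def by blast
  then show "weakly_p_summable p sc V P (\<lambda>n. (x \<circ> r) (k n) - (x \<circ> r) (j n))" by simp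
qed

lemma wpC_shift: assumes C: "weakly_p_Cauchy p sc V P (\<lambda>n. x (n + m))"
  and ls: "lin_space sc V" and xV: "\<forall>n. x n \<in> V"
  shows "weakly_p_Cauchy p sc V P x"
  unfolding weakly_p_Cauchy_def weakly_p_summable_def
proof (intro allI impI conjI ballI)
  fix k j :: "nat \<Rightarrow> nat" and n assume kj: "strict_mono k \<and> strict_mono j"
  show "x (k n) - x (j n) \<in> V" using ls_diff[OF ls] xV by blast
next
  fix k j :: "nat \<Rightarrow> nat" and f assume kj: "strict_mono k \<and> strict_mono j"
    and f: "f \<in> dual sc V P"
  define k' where "k' n = k (n + m) - m" for n
  define j' where "j' n = j (n + m) - m" for n
  have kge: "k (n + m) \<ge> n + m" for n using kj seq_suble by blast
  have jge: "j (n + m) \<ge> n + m" for n using kj seq_suble by blast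
  have k'e: "k' n + m = k (n + m)" for n using kge[of n] unfolding k'_def by simp
  have j'e: "j' n + m = j (n + m)" for n using jge[of n] unfolding j'_def by simp
  have "strict_mono k'" unfolding strict_mono_def
  proof (intro allI impI)
    fix a b :: nat assume "a < b"
    then have "k (a + m) < k (b + m)" using kj unfolding strict_mono_def by simp
    then show "k' a < k' b" using k'e[of a] k'e[of b] by simp
  qed
  moreover have "strict_mono j'" unfolding strict_mono_def
  proof (intro allI impI)
    fix a b :: nat assume "a < b"
    then have "j (a + m) < j (b + m)" using kj unfolding strict_mono_def by simp
    then show "j' a < j' b" using j'e[of a] j'e[of b] by simp
  qed
  ultimately have "weakly_p_summable p sc V P (\<lambda>n. x (k' n + m) - x (j' n + m))"
    using C unfolding weakly_p_Cauchy_def by blast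
  then have "in_lp p (\<lambda>n. f (x (k' n + m) - x (j' n + m)))"
    using f unfolding weakly_p_summable_def by blast
  then have "in_lp p (\<lambda>n. f (x (k (n + m)) - x (j (n + m))))" by (simp only: k'e j'e)
  then show "in_lp p (\<lambda>n. f (x (k n) - x (j n)))" by (rule in_lp_shift)
qed


lemma inj_sum_add: "inj_sum j (v + w) = inj_sum j v + inj_sum j w"
  unfolding inj_sum_def by (auto simp: fun_eq_iff)

lemma inj_sum_diff: "(inj_sum j a - inj_sum j b) j = a - b"
  unfolding inj_sum_def by simp

lemma inj_sum_app: "inj_sum j v i = (if i = j then v else 0)"
  unfolding inj_sum_def by simp

lemma fam_sc_inj: assumes "\<forall>i\<in>I. lin_space (sc i) (W i)" "j \<in> I"
  shows "fam_sc I sc c (inj_sum j v) = inj_sum j (sc j c v)"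
  unfolding fam_sc_def inj_sum_def using ls_sc_zero assms by (auto simp: fun_eq_iff)

lemma prodV_inj: assumes "\<forall>i\<in>I. lin_space (sc i) (W i)" "x \<in> prod_V I W"
  shows "inj_sum j (x j) \<in> prod_V I W"
  using assms unfolding prod_V_def inj_sum_def lin_space_def by auto

lemma prodV_inj': assumes "\<forall>i\<in>I. lin_space (sc i) (W i)" "j \<in> I" "v \<in> W j"
  shows "inj_sum j v \<in> prod_V I W"
  using assms unfolding prod_V_def inj_sum_def lin_space_def by auto

lemma prodV_restr: assumes "\<forall>i\<in>I. lin_space (sc i) (W i)" "x \<in> prod_V I W"
  shows "(\<lambda>i. if i \<in> J then 0 else x i) \<in> prod_V I W"
  using assms unfolding prod_V_def lin_space_def by auto

lemma prodV_diff: assumes "\<forall>i\<in>I. lin_space (sc i) (W i)" "x \<in> prod_V I W" "y \<in> prod_V I W"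
  shows "x - y \<in> prod_V I W"
  using assms ls_diff unfolding prod_V_def by fastforce

lemma sumV_inj: assumes "\<forall>i\<in>I. lin_space (sc i) (W i)" "x \<in> sum_V I W"
  shows "inj_sum j (x j) \<in> sum_V I W"
proof -
  have "finite {i. inj_sum j (x j) i \<noteq> 0}"
    by (rule finite_subset[of _ "{j}"]) (auto simp: inj_sum_def)
  then show ?thesis using prodV_inj[OF assms(1)] assms(2) unfolding sum_V_def by auto
qed

lemma sumV_inj': assumes "\<forall>i\<in>I. lin_space (sc i) (W i)" "j \<in> I" "v \<in> W j"
  shows "inj_sum j v \<in> sum_V I W"
proof -
  have "finite {i. inj_sum j v i \<noteq> 0}"
    by (rule finite_subset[of _ "{j}"]) (auto simp: inj_sum_def)
  then show ?thesis using prodV_inj'[OF assms] unfolding sum_V_def by auto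
qed

lemma sumV_restr: assumes "\<forall>i\<in>I. lin_space (sc i) (W i)" "x \<in> sum_V I W"
  shows "(\<lambda>i. if i \<in> J then 0 else x i) \<in> sum_V I W"
proof -
  have "finite {i. x i \<noteq> 0}" using assms(2) unfolding sum_V_def by auto
  then have "finite {i. (if i \<in> J then 0 else x i) \<noteq> 0}"
    by (rule finite_subset[rotated]) auto
  then show ?thesis using prodV_restr[OF assms(1)] assms(2) unfolding sum_V_def by auto
qed

lemma sumV_diff: assumes "\<forall>i\<in>I. lin_space (sc i) (W i)" "x \<in> sum_V I W" "y \<in> sum_V I W"
  shows "x - y \<in> sum_V I W"
proof -
  have "finite ({i. x i \<noteq> 0} \<union> {i. y i \<noteq> 0})" using assms(2,3) unfolding sum_V_def by auto
  then have "finite {i. (x - y) i \<noteq> 0}" by (rule finite_subset[rotated]) auto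
  then show ?thesis using prodV_diff[OF assms(1)] assms(2,3) unfolding sum_V_def by auto
qed

lemma decomp:
  assumes add: "\<forall>x\<in>S. \<forall>y\<in>S. f (x + y) = f x + f y"
    and cinj: "\<forall>x\<in>S. \<forall>j. inj_sum j (x j) \<in> S"
    and cres: "\<forall>x\<in>S. \<forall>J. (\<lambda>i. if i \<in> J then 0 else x i) \<in> S"
    and J: "finite J"
  shows "\<forall>x\<in>S. f x = (\<Sum>j\<in>J. f (inj_sum j (x j))) + f (\<lambda>i. if i \<in> J then 0 else x i)"
  using J
proof (induction J rule: finite_induct)
  case empty then show ?case by simp
next
  case (insert j J)
  show ?case
  proof
    fix x assume x: "x \<in> S"
    have e: "(\<lambda>i. if i \<in> J then 0 else x i) = inj_sum j (x j) + (\<lambda>i. if i \<in> insert j J then 0 else x i)"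
      using insert(2) unfolding inj_sum_def by (auto simp: fun_eq_iff)
    have "f (\<lambda>i. if i \<in> J then 0 else x i) = f (inj_sum j (x j)) + f (\<lambda>i. if i \<in> insert j J then 0 else x i)"
      unfolding e using add cinj cres x by blast
    then show "f x = (\<Sum>j\<in>insert j J. f (inj_sum j (x j))) + f (\<lambda>i. if i \<in> insert j J then 0 else x i)"
      using insert x by (simp add: algebra_simps)
  qed
qed

lemma comp_dual:
  fixes PB :: "('a::ab_group_add \<Rightarrow> real) set" and Q :: "('b::ab_group_add \<Rightarrow> real) set"
    and e :: "'b \<Rightarrow> 'a" and f :: "'a \<Rightarrow> 'k::real_normed_field"
  assumes f: "f \<in> dual scB S PB"
    and eS: "\<forall>v\<in>W. e v \<in> S"
    and eadd: "\<forall>v\<in>W. \<forall>w\<in>W. e (v + w) = e v + e w"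
    and esc: "\<forall>c. \<forall>v\<in>W. scB c (e v) = e (sc c v)"
    and Wls: "lin_space sc W"
    and nnB: "\<forall>q\<in>PB. \<forall>x\<in>S. q x \<ge> 0"
    and nnj: "\<forall>q\<in>Q. \<forall>v\<in>W. q v \<ge> 0"
    and dom: "\<forall>q\<in>PB. \<exists>F C. F \<subseteq> Q \<and> finite F \<and> (\<forall>v\<in>W. q (e v) \<le> C * (\<Sum>p\<in>F. p v))"
  shows "(\<lambda>v. f (e v)) \<in> dual sc W Q"
proof -
  obtain F C where F: "F \<subseteq> PB" "finite F" "C \<ge> 0" "\<forall>x\<in>S. norm (f x) \<le> C * (\<Sum>q\<in>F. q x)"
    using dual_bound[OF f nnB] by blast
  have "\<forall>a\<in>F. \<exists>F C. F \<subseteq> Q \<and> finite F \<and> (\<forall>v\<in>W. a (e v) \<le> C * (\<Sum>q\<in>F. q v))"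
    using dom F(1) by blast
  then obtain F' C' where F': "F' \<subseteq> Q" "finite F'" "C' \<ge> 0"
      "\<forall>v\<in>W. (\<Sum>a\<in>F. a (e v)) \<le> C' * (\<Sum>q\<in>F'. q v)"
    using combine_bound[OF F(2) nnj, of "\<lambda>a v. a (e v)"] by blast
  have bd: "\<forall>v\<in>W. norm (f (e v)) \<le> (C * C') * (\<Sum>q\<in>F'. q v)"
  proof
    fix v assume v: "v \<in> W"
    have "norm (f (e v)) \<le> C * (\<Sum>q\<in>F. q (e v))" using F(4) eS v by blast
    also have "\<dots> \<le> C * (C' * (\<Sum>q\<in>F'. q v))" using F'(4) v F(3) by (intro mult_left_mono) auto
    finally show "norm (f (e v)) \<le> (C * C') * (\<Sum>q\<in>F'. q v)" by (simp add: mult.assoc)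
  qed
  have lin1: "\<forall>x\<in>W. \<forall>y\<in>W. f (e (x + y)) = f (e x) + f (e y)"
    using eadd eS dual_add[OF f] by simp
  have lin2: "\<forall>c. \<forall>x\<in>W. f (e (sc c x)) = c * f (e x)"
  proof (intro allI ballI)
    fix c x assume x: "x \<in> W"
    have "f (scB c (e x)) = c * f (e x)" using f eS x unfolding dual_def by blast
    then show "f (e (sc c x)) = c * f (e x)" using esc x by simp
  qed
  show ?thesis unfolding dual_def using lin1 lin2 bd F' by blast
qed


lemma prodV_ls: assumes "\<forall>i\<in>I. lin_space (sc i) (W i)"
  shows "lin_space (fam_sc I sc) (prod_V I W)"
  using assms unfolding lin_space_def fam_sc_def prod_V_def by (auto simp: fun_eq_iff)

lemma sumV_ls: assumes "\<forall>i\<in>I. lin_space (sc i) (W i)"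
  shows "lin_space (fam_sc I sc) (sum_V I W)"
proof -
  have L: "lin_space (fam_sc I sc) (prod_V I W)" by (rule prodV_ls[OF assms])
  have z: "0 \<in> sum_V I W" using L unfolding sum_V_def lin_space_def by auto
  have a: "\<forall>x\<in>sum_V I W. \<forall>y\<in>sum_V I W. x + y \<in> sum_V I W"
  proof (intro ballI)
    fix x y assume xy: "x \<in> sum_V I W" "y \<in> sum_V I W"
    have "finite ({i. x i \<noteq> 0} \<union> {i. y i \<noteq> 0})" using xy unfolding sum_V_def by auto
    then have "finite {i. (x + y) i \<noteq> 0}" by (rule finite_subset[rotated]) auto
    then show "x + y \<in> sum_V I W" using L xy unfolding sum_V_def lin_space_def by auto
  qed
  have s: "\<forall>c. \<forall>x\<in>sum_V I W. fam_sc I sc c x \<in> sum_V I W"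
  proof (intro allI ballI)
    fix c x assume x: "x \<in> sum_V I W"
    have "finite {i. x i \<noteq> 0}" using x unfolding sum_V_def by auto
    have z: "\<forall>i\<in>I. sc i c 0 = 0" using assms ls_sc_zero by blast
    have "finite {i. x i \<noteq> 0}" using x unfolding sum_V_def by auto
    then have "finite {i. fam_sc I sc c x i \<noteq> 0}"
      by (rule finite_subset[rotated]) (use z in \<open>auto simp: fam_sc_def\<close>)
    then show "fam_sc I sc c x \<in> sum_V I W" using L x unfolding sum_V_def lin_space_def by auto
  qed
  show ?thesis using L z a s unfolding lin_space_def sum_V_def by blast
qed

lemma wCSP_component:
  fixes Q :: "('b::ab_group_add \<Rightarrow> real) set" and W :: "'b set" and j :: 'i
    and S :: "('i \<Rightarrow> 'b) set" and sc :: "'k::real_normed_field \<Rightarrow> 'b \<Rightarrow> 'b"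
    and scB :: "'k \<Rightarrow> ('i \<Rightarrow> 'b) \<Rightarrow> ('i \<Rightarrow> 'b)" and PB :: "(('i \<Rightarrow> 'b) \<Rightarrow> real) set"
  assumes big: "wCSP p scB S PB"
    and ls: "lin_space sc W"
    and emb: "\<forall>v\<in>W. inj_sum j v \<in> S"
    and bnd: "\<And>x::nat \<Rightarrow> 'b. (\<forall>n. x n \<in> W) \<Longrightarrow> lcs_bounded Q (range x) \<Longrightarrow>
                   lcs_bounded PB (range (\<lambda>n. inj_sum j (x n)))"
    and proj: "\<forall>f\<in>dual sc W Q. (\<lambda>y. f (y j)) \<in> dual scB S PB"
  shows "wCSP p sc W Q"
  unfolding wCSP_def
proof (intro allI impI)
  fix x :: "nat \<Rightarrow> 'b" assume x: "(\<forall>n. x n \<in> W) \<and> lcs_bounded Q (range x)"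
  define y where "y n = inj_sum j (x n)" for n
  have "lcs_bounded PB (range y)" using bnd[of x] x unfolding y_def by blast
  moreover have "\<forall>n. y n \<in> S" using x emb unfolding y_def by auto
  ultimately have "(\<forall>n. y n \<in> S) \<and> lcs_bounded PB (range y)" by blast
  then obtain r where r: "strict_mono r" "weakly_p_Cauchy p scB S PB (y \<circ> r)"
    using big unfolding wCSP_def by blast
  have "weakly_p_Cauchy p sc W Q (x \<circ> r)"
    unfolding weakly_p_Cauchy_def weakly_p_summable_def
  proof (intro allI impI conjI ballI)
    fix k l :: "nat \<Rightarrow> nat" and n
    show "(x \<circ> r) (k n) - (x \<circ> r) (l n) \<in> W" using ls_diff[OF ls] x by auto
  next
    fix k l :: "nat \<Rightarrow> nat" and f assume kl: "strict_mono k \<and> strict_mono l" and f: "f \<in> dual sc W Q"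
    have "weakly_p_summable p scB S PB (\<lambda>n. (y \<circ> r) (k n) - (y \<circ> r) (l n))"
      using r(2) kl unfolding weakly_p_Cauchy_def by blast
    then have A: "\<forall>g\<in>dual scB S PB. in_lp p (\<lambda>n. g ((y \<circ> r) (k n) - (y \<circ> r) (l n)))"
      unfolding weakly_p_summable_def by blast
    have g: "(\<lambda>z. f (z j)) \<in> dual scB S PB" using proj f by blast
    have "in_lp p (\<lambda>n. (\<lambda>z. f (z j)) ((y \<circ> r) (k n) - (y \<circ> r) (l n)))"
      using A[rule_format, OF g] .
    then show "in_lp p (\<lambda>n. f ((x \<circ> r) (k n) - (x \<circ> r) (l n)))"
      unfolding y_def o_def inj_sum_diff .
  qed
  then show "\<exists>r. strict_mono r \<and> weakly_p_Cauchy p sc W Q (x \<circ> r)" using r(1) by blast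
qed

lemma bounded_sum_le:
  fixes Q :: "('b \<Rightarrow> real) set"
  assumes "finite F" "F \<subseteq> Q" "lcs_bounded Q (range x)"
  shows "\<exists>B. \<forall>n. (\<Sum>q\<in>F. q (x n)) \<le> B"
proof -
  have "\<forall>q\<in>F. \<exists>b. \<forall>n. q (x n) \<le> b" using assms(2,3) unfolding lcs_bounded_def bdd_above_def by auto
  then obtain b where b: "\<forall>q\<in>F. \<forall>n. q (x n) \<le> b q" by metis
  have "\<forall>n. (\<Sum>q\<in>F. q (x n)) \<le> (\<Sum>q\<in>F. b q)" using b by (auto intro: sum_mono)
  then show ?thesis by blast
qed

lemma prod_bnd:
  assumes lcs: "\<forall>i. lcs (sc i) (V i) (P i)" and x: "\<forall>n. x n \<in> V j" "lcs_bounded (P j) (range x)"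
  shows "lcs_bounded (prod_P UNIV P) (range (\<lambda>n. inj_sum j (x n)))"
  unfolding lcs_bounded_def
proof
  fix q assume "q \<in> prod_P UNIV P"
  then obtain i q' where q: "q = (\<lambda>x. q' (x i))" "q' \<in> P i" unfolding prod_P_def by blast
  show "bdd_above (q ` range (\<lambda>n. inj_sum j (x n)))"
  proof (cases "i = j")
    case True
    then have "bdd_above (q' ` range x)" using x(2) q(2) unfolding lcs_bounded_def by auto
    then show ?thesis using True q by (simp add: inj_sum_def image_image)
  next
    case False
    have "q' 0 = 0" using lcs_zero lcs q by blast
    then show ?thesis using False q by (simp add: inj_sum_def image_image)
  qed
qed

lemma prod_proj:
  fixes P :: "nat \<Rightarrow> ('a::ab_group_add \<Rightarrow> real) set"
  assumes f: "f \<in> dual (sc j) (V j) (P j)"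
  shows "(\<lambda>y. f (y j)) \<in> dual (fam_sc UNIV sc) (prod_V UNIV V) (prod_P UNIV P)"
proof -
  obtain F C where F: "F \<subseteq> P j" "finite F" "\<forall>v\<in>V j. norm (f v) \<le> C * (\<Sum>q\<in>F. q v)"
    using f unfolding dual_def by blast
  define G where "G = (\<lambda>q. \<lambda>x::nat \<Rightarrow> 'a. q (x j)) ` F"
  have inj: "inj_on (\<lambda>q. \<lambda>x::nat \<Rightarrow> 'a. q (x j)) F"
  proof (rule inj_onI)
    fix q1 q2 assume eq: "(\<lambda>x::nat \<Rightarrow> 'a. q1 (x j)) = (\<lambda>x. q2 (x j))"
    have "q1 v = q2 v" for v using fun_cong[OF eq, of "\<lambda>_. v"] by simp
    then show "q1 = q2" by auto
  qed
  have G: "G \<subseteq> prod_P UNIV P" "finite G" using F unfolding G_def prod_P_def by auto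
  have "\<forall>x\<in>prod_V UNIV V. norm (f (x j)) \<le> C * (\<Sum>q\<in>G. q x)"
  proof
    fix x assume x: "x \<in> prod_V UNIV V"
    have "(\<Sum>q\<in>G. q x) = (\<Sum>q\<in>F. q (x j))" unfolding G_def by (simp add: sum.reindex[OF inj])
    then show "norm (f (x j)) \<le> C * (\<Sum>q\<in>G. q x)" using F(3) x unfolding prod_V_def by auto
  qed
  moreover have "\<forall>x\<in>prod_V UNIV V. \<forall>y\<in>prod_V UNIV V. f ((x + y) j) = f (x j) + f (y j)"
    using f unfolding dual_def prod_V_def by auto
  moreover have "\<forall>c. \<forall>x\<in>prod_V UNIV V. f (fam_sc UNIV sc c x j) = c * f (x j)"
    using f unfolding dual_def prod_V_def fam_sc_def by auto
  ultimately show ?thesis using G unfolding dual_def by blast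
qed

lemma sumP_coord:
  assumes lcs: "\<forall>i\<in>I. lcs (sc i) (W i) (Q i)" and j: "j \<in> I"
    and q: "seminorm_on (sc j) (W j) q"
    and dom: "\<exists>F C. F \<subseteq> Q j \<and> finite F \<and> (\<forall>v\<in>W j. q v \<le> C * (\<Sum>p\<in>F. p v))"
  shows "(\<lambda>y. q (y j)) \<in> sum_P I sc W Q"
proof -
  have lsj: "lin_space (sc j) (W j)" using lcs j unfolding lcs_def by blast
  have sn: "seminorm_on (fam_sc I sc) (sum_V I W) (\<lambda>y. q (y j))"
    using q j unfolding seminorm_on_def sum_V_def prod_V_def fam_sc_def by auto
  have q0: "q 0 = 0" using sn_zero[OF lsj q] .
  have "\<forall>i\<in>I. \<exists>F C. F \<subseteq> Q i \<and> finite F \<and> (\<forall>v\<in>W i. q (inj_sum i v j) \<le> C * (\<Sum>p\<in>F. p v))"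
  proof
    fix i assume i: "i \<in> I"
    show "\<exists>F C. F \<subseteq> Q i \<and> finite F \<and> (\<forall>v\<in>W i. q (inj_sum i v j) \<le> C * (\<Sum>p\<in>F. p v))"
    proof (cases "i = j")
      case True then show ?thesis using dom by (simp add: inj_sum_def)
    next
      case False
      then show ?thesis using q0 by (intro exI[of _ "{}"] exI[of _ 0]) (simp add: inj_sum_def)
    qed
  qed
  then show ?thesis using sn unfolding sum_P_def by blast
qed

lemma sum_bnd:
  assumes lcs: "\<forall>i\<in>I. lcs (sc i) (W i) (Q i)" and j: "j \<in> I"
    and x: "\<forall>n. x n \<in> W j" "lcs_bounded (Q j) (range x)"
  shows "lcs_bounded (sum_P I sc W Q) (range (\<lambda>n. inj_sum j (x n)))"
  unfolding lcs_bounded_def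
proof
  fix q assume "q \<in> sum_P I sc W Q"
  then obtain F C where F: "F \<subseteq> Q j" "finite F" "\<forall>v\<in>W j. q (inj_sum j v) \<le> C * (\<Sum>p\<in>F. p v)"
    using j unfolding sum_P_def by blast
  obtain B where B: "\<forall>n. (\<Sum>p\<in>F. p (x n)) \<le> B" using bounded_sum_le[OF F(2,1) x(2)] by blast
  have nn: "\<forall>q\<in>Q j. \<forall>v\<in>W j. q v \<ge> 0" using lcs_nonneg lcs j by blast
  have "\<forall>n. q (inj_sum j (x n)) \<le> max C 0 * B"
  proof
    fix n
    have s0: "(\<Sum>p\<in>F. p (x n)) \<ge> 0" using sum_sn_nonneg[OF F(1) nn] x by blast
    have "q (inj_sum j (x n)) \<le> C * (\<Sum>p\<in>F. p (x n))" using F(3) x by blast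
    also have "\<dots> \<le> max C 0 * (\<Sum>p\<in>F. p (x n))" using s0 by (intro mult_right_mono) auto
    also have "\<dots> \<le> max C 0 * B" using B by (intro mult_left_mono) auto
    finally show "q (inj_sum j (x n)) \<le> max C 0 * B" .
  qed
  then show "bdd_above (q ` range (\<lambda>n. inj_sum j (x n)))" unfolding bdd_above_def by auto
qed

lemma sum_proj:
  assumes lcs: "\<forall>i\<in>I. lcs (sc i) (W i) (Q i)" and j: "j \<in> I"
    and f: "f \<in> dual (sc j) (W j) (Q j)"
  shows "(\<lambda>y. f (y j)) \<in> dual (fam_sc I sc) (sum_V I W) (sum_P I sc W Q)"
proof -
  have sn: "seminorm_on (sc j) (W j) (\<lambda>v. norm (f v))"
    using f unfolding seminorm_on_def dual_def by (auto simp: norm_triangle_ineq norm_mult)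
  have "\<exists>F C. F \<subseteq> Q j \<and> finite F \<and> (\<forall>v\<in>W j. norm (f v) \<le> C * (\<Sum>p\<in>F. p v))"
    using f unfolding dual_def by blast
  then have qf: "(\<lambda>y. norm (f (y j))) \<in> sum_P I sc W Q"
    using sumP_coord[OF lcs j sn] by simp
  have "\<forall>x\<in>sum_V I W. norm (f (x j)) \<le> 1 * (\<Sum>q\<in>{\<lambda>y. norm (f (y j))}. q x)" by simp
  moreover have "\<forall>x\<in>sum_V I W. \<forall>y\<in>sum_V I W. f ((x + y) j) = f (x j) + f (y j)"
    using f j unfolding dual_def sum_V_def prod_V_def by auto
  moreover have "\<forall>c. \<forall>x\<in>sum_V I W. f (fam_sc I sc c x j) = c * f (x j)"
    using f j unfolding dual_def sum_V_def prod_V_def fam_sc_def by auto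
  ultimately show ?thesis using qf unfolding dual_def
    by (intro CollectI conjI) (blast, blast, intro exI[of _ "{\<lambda>y. norm (f (y j))}"] exI[of _ 1], auto)
qed


lemma fin_subseq:
  fixes Pd :: "'j \<Rightarrow> (nat \<Rightarrow> nat) \<Rightarrow> bool"
  assumes J: "finite J"
    and ex: "\<forall>j\<in>J. \<forall>s::nat\<Rightarrow>nat. strict_mono s \<longrightarrow> (\<exists>r. strict_mono r \<and> Pd j (s \<circ> r))"
    and st: "\<And>j s r. Pd j s \<Longrightarrow> strict_mono r \<Longrightarrow> Pd j (s \<circ> r)"
  shows "\<exists>r. strict_mono r \<and> (\<forall>j\<in>J. Pd j r)"
  using J ex
proof (induction J rule: finite_induct)
  case empty
  have "strict_mono (id :: nat \<Rightarrow> nat)" by (simp add: strict_mono_def)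
  then show ?case by blast
next
  case (insert j J)
  then obtain r where r: "strict_mono r" "\<forall>i\<in>J. Pd i r" by blast
  obtain r' where r': "strict_mono r'" "Pd j (r \<circ> r')" using insert(4) r(1) by blast
  have "strict_mono (r \<circ> r')" using r(1) r'(1) strict_mono_o by blast
  moreover have "\<forall>i\<in>J. Pd i (r \<circ> r')" using r(2) r'(1) st by blast
  ultimately show ?case using r'(2) by blast
qed

lemma prod_back:
  fixes V :: "nat \<Rightarrow> 'a::ab_group_add set" and sc :: "nat \<Rightarrow> 'k::real_normed_field \<Rightarrow> 'a \<Rightarrow> 'a"
    and P :: "nat \<Rightarrow> ('a \<Rightarrow> real) set"
  assumes p: "1 \<le> p" and lcs: "\<forall>i. lcs (sc i) (V i) (P i)" and w: "\<forall>i. wCSP p (sc i) (V i) (P i)"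
  shows "wCSP p (fam_sc UNIV sc) (prod_V UNIV V) (prod_P UNIV P)"
  unfolding wCSP_def
proof (intro allI impI)
  fix x :: "nat \<Rightarrow> nat \<Rightarrow> 'a"
  assume x: "(\<forall>n. x n \<in> prod_V UNIV V) \<and> lcs_bounded (prod_P UNIV P) (range x)"
  have ls: "\<forall>i. lin_space (sc i) (V i)" using lcs unfolding lcs_def by blast
  have xi: "x n i \<in> V i" for n i using x unfolding prod_V_def by auto
  have bi: "lcs_bounded (P i) (range (\<lambda>n. x (s n) i))" for i and s :: "nat \<Rightarrow> nat"
    unfolding lcs_bounded_def
  proof
    fix q assume q: "q \<in> P i"
    have mem: "(\<lambda>y. q (y i)) \<in> prod_P UNIV P" unfolding prod_P_def using q by blast
    have B: "\<forall>q\<in>prod_P UNIV P. bdd_above (q ` range x)" using conjunct2[OF x] unfolding lcs_bounded_def .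
    have "bdd_above ((\<lambda>y. q (y i)) ` range x)" using bspec[OF B mem] .
    then obtain b where "\<forall>n. q (x n i) \<le> b" unfolding bdd_above_def by auto
    then show "bdd_above (q ` range (\<lambda>n. x (s n) i))" unfolding bdd_above_def by auto
  qed
  define Pd where "Pd i s \<longleftrightarrow> weakly_p_Cauchy p (sc i) (V i) (P i) (\<lambda>n. x (s n) i)" for i s
  interpret S: subseqs Pd
  proof unfold_locales
    fix n and s :: "nat \<Rightarrow> nat" assume "strict_mono s"
    have wn: "wCSP p (sc n) (V n) (P n)" using w by blast
    have "\<exists>r'. strict_mono r' \<and> weakly_p_Cauchy p (sc n) (V n) (P n) ((\<lambda>m. x (s m) n) \<circ> r')"
      using wn[unfolded wCSP_def, rule_format, of "\<lambda>m. x (s m) n"] xi bi[of n s] by blast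
    then obtain r' where "strict_mono r'" "weakly_p_Cauchy p (sc n) (V n) (P n) ((\<lambda>m. x (s m) n) \<circ> r')"
      by blast
    then show "\<exists>r'. strict_mono r' \<and> Pd n (s \<circ> r')" unfolding Pd_def o_def by auto
  qed
  have stable: "Pd n (s \<circ> r)" if "strict_mono r" "Pd n s" for r s n
    using wpC_subseq[OF that(2)[unfolded Pd_def] that(1)] unfolding Pd_def by (simp add: o_def)
  have ci: "weakly_p_Cauchy p (sc i) (V i) (P i) (\<lambda>n. x (S.diagseq n) i)" for i
  proof -
    have "Pd i (S.diagseq \<circ> (+) (Suc i))" by (rule S.diagseq_holds) (rule stable)
    then have "weakly_p_Cauchy p (sc i) (V i) (P i) (\<lambda>n. (\<lambda>m. x (S.diagseq m) i) (n + Suc i))"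
      unfolding Pd_def by (simp add: add.commute)
    then show ?thesis by (rule wpC_shift) (use ls xi in auto)
  qed
  have lsU: "\<forall>i\<in>UNIV. lin_space (sc i) (V i)" using ls by blast
  have nnB: "\<forall>q\<in>prod_P UNIV P. \<forall>y\<in>prod_V UNIV V. q y \<ge> 0"
    using lcs lcs_nonneg unfolding prod_P_def prod_V_def by fastforce
  have "weakly_p_Cauchy p (fam_sc UNIV sc) (prod_V UNIV V) (prod_P UNIV P) (x \<circ> S.diagseq)"
    unfolding weakly_p_Cauchy_def weakly_p_summable_def
  proof (intro allI impI conjI ballI)
    fix k l :: "nat \<Rightarrow> nat" and n
    show "(x \<circ> S.diagseq) (k n) - (x \<circ> S.diagseq) (l n) \<in> prod_V UNIV V"
      using prodV_diff[OF lsU] x by auto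
  next
    fix k l :: "nat \<Rightarrow> nat" and f
    assume kl: "strict_mono k \<and> strict_mono l"
      and f: "f \<in> dual (fam_sc UNIV sc) (prod_V UNIV V) (prod_P UNIV P)"
    define d where "d n = x (S.diagseq (k n)) - x (S.diagseq (l n))" for n
    have dV: "d n \<in> prod_V UNIV V" for n using prodV_diff[OF lsU] x unfolding d_def by auto
    obtain F C where F: "F \<subseteq> prod_P UNIV P" "finite F" "C \<ge> 0"
      "\<forall>y\<in>prod_V UNIV V. norm (f y) \<le> C * (\<Sum>q\<in>F. q y)"
      using dual_bound[OF f nnB] by blast
    have "\<forall>q\<in>F. \<exists>iq. q = (\<lambda>y. snd iq (y (fst iq))) \<and> snd iq \<in> P (fst iq)"
      using F(1) unfolding prod_P_def by force
    then obtain iq where iq: "\<forall>q\<in>F. q = (\<lambda>y. snd (iq q) (y (fst (iq q)))) \<and> snd (iq q) \<in> P (fst (iq q))"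
      by (rule bchoice[elim_format]) blast
    define J where "J = (\<lambda>q. fst (iq q)) ` F"
    have J: "finite J" using F(2) unfolding J_def by blast
    have dec: "\<forall>y\<in>prod_V UNIV V. f y = (\<Sum>j\<in>J. f (inj_sum j (y j))) + f (\<lambda>i. if i \<in> J then 0 else y i)"
      by (rule decomp[OF _ _ _ J]) (use dual_add[OF f] prodV_inj[OF lsU] prodV_restr[OF lsU] in blast)+
    have rz: "f (\<lambda>i. if i \<in> J then 0 else y i) = 0" if y: "y \<in> prod_V UNIV V" for y
    proof -
      have "(\<Sum>q\<in>F. q (\<lambda>i. if i \<in> J then 0 else y i)) = (\<Sum>q\<in>F. 0)"
      proof (rule sum.cong)
        fix q assume q: "q \<in> F"
        obtain i0 q0 where qe: "q = (\<lambda>y. q0 (y i0))" "q0 \<in> P i0" "i0 \<in> J"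
          using iq q unfolding J_def by blast
        have "q (\<lambda>i. if i \<in> J then 0 else y i) = q0 0" using qe by simp
        also have "\<dots> = 0" using lcs_zero lcs qe by blast
        finally show "q (\<lambda>i. if i \<in> J then 0 else y i) = 0" .
      qed simp
      moreover have "(\<lambda>i. if i \<in> J then 0 else y i) \<in> prod_V UNIV V" using prodV_restr[OF lsU y] .
      ultimately show ?thesis using F(4) by fastforce
    qed
    have gj: "(\<lambda>v. f (inj_sum j v)) \<in> dual (sc j) (V j) (P j)" for j
    proof (rule comp_dual[OF f, where e = "inj_sum j" and W = "V j" and sc = "sc j" and Q = "P j"])
      show "\<forall>v\<in>V j. inj_sum j v \<in> prod_V UNIV V" using prodV_inj'[OF lsU] by blast
      show "\<forall>v\<in>V j. \<forall>w\<in>V j. inj_sum j (v + w) = inj_sum j v + inj_sum j w" by (auto simp: inj_sum_def fun_eq_iff)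
      show "\<forall>c. \<forall>v\<in>V j. fam_sc UNIV sc c (inj_sum j v) = inj_sum j (sc j c v)"
        using fam_sc_inj[OF lsU] by blast
      show "lin_space (sc j) (V j)" using ls by blast
      show "\<forall>q\<in>prod_P UNIV P. \<forall>x\<in>prod_V UNIV V. 0 \<le> q x" using nnB .
      show "\<forall>q\<in>P j. \<forall>v\<in>V j. 0 \<le> q v" using lcs lcs_nonneg by blast
      show "\<forall>q\<in>prod_P UNIV P. \<exists>F C. F \<subseteq> P j \<and> finite F \<and> (\<forall>v\<in>V j. q (inj_sum j v) \<le> C * sum (\<lambda>p. p v) F)"
      proof
        fix q assume "q \<in> prod_P UNIV P"
        then obtain i q' where q: "q = (\<lambda>x. q' (x i))" "q' \<in> P i" unfolding prod_P_def by blast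
        show "\<exists>F C. F \<subseteq> P j \<and> finite F \<and> (\<forall>v\<in>V j. q (inj_sum j v) \<le> C * sum (\<lambda>p. p v) F)"
        proof (cases "i = j")
          case True
          then show ?thesis using q by (intro exI[of _ "{q'}"] exI[of _ 1]) (auto simp: inj_sum_def)
        next
          case False
          have "q' 0 = 0" using lcs_zero lcs q by blast
          then show ?thesis using q False by (intro exI[of _ "{}"] exI[of _ 0]) (auto simp: inj_sum_def)
        qed
      qed
    qed
    have "in_lp p (\<lambda>n. \<Sum>j\<in>J. f (inj_sum j (d n j)))"
    proof (rule in_lp_sum[OF p J], rule ballI)
      fix j assume "j \<in> J"
      have ws: "weakly_p_summable p (sc j) (V j) (P j) (\<lambda>n. x (S.diagseq (k n)) j - x (S.diagseq (l n)) j)"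
        using ci[of j] kl unfolding weakly_p_Cauchy_def by blast
      have "in_lp p (\<lambda>n. f (inj_sum j (x (S.diagseq (k n)) j - x (S.diagseq (l n)) j)))"
        using bspec[OF conjunct2[OF ws[unfolded weakly_p_summable_def]] gj[of j]] by simp
      then show "in_lp p (\<lambda>n. f (inj_sum j (d n j)))" unfolding d_def by simp
    qed
    moreover have "f (d n) = (\<Sum>j\<in>J. f (inj_sum j (d n j)))" for n
      using dec dV[of n] rz[OF dV[of n]] by simp
    ultimately show "in_lp p (\<lambda>n. f ((x \<circ> S.diagseq) (k n) - (x \<circ> S.diagseq) (l n)))"
      unfolding d_def by simp
  qed
  then show "\<exists>r. strict_mono r \<and> weakly_p_Cauchy p (fam_sc UNIV sc) (prod_V UNIV V) (prod_P UNIV P) (x \<circ> r)"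
    using S.subseq_diagseq by blast
qed


lemma sum_support:
  fixes W :: "'i \<Rightarrow> 'b::ab_group_add set" and sc :: "'i \<Rightarrow> 'k::real_normed_field \<Rightarrow> 'b \<Rightarrow> 'b"
    and Q :: "'i \<Rightarrow> ('b \<Rightarrow> real) set" and x :: "nat \<Rightarrow> 'i \<Rightarrow> 'b"
  assumes lcs: "\<forall>i\<in>I. lcs (sc i) (W i) (Q i)" and xV: "\<forall>n. x n \<in> sum_V I W"
    and bd: "lcs_bounded (sum_P I sc W Q) (range x)"
  shows "\<exists>J. finite J \<and> J \<subseteq> I \<and> (\<forall>n i. i \<notin> J \<longrightarrow> x n i = 0)"
proof (rule ccontr)
  assume neg: "\<not> ?thesis"
  define S where "S = {i. \<exists>n. x n i \<noteq> 0}"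
  have SI: "S \<subseteq> I" using xV unfolding S_def sum_V_def prod_V_def by auto
  have "infinite S"
  proof
    assume "finite S"
    moreover have "\<forall>n i. i \<notin> S \<longrightarrow> x n i = 0" unfolding S_def by auto
    ultimately show False using neg SI by blast
  qed
  then obtain \<iota> :: "nat \<Rightarrow> 'i" where \<iota>: "inj \<iota>" "range \<iota> \<subseteq> S"
    using infinite_countable_subset by blast
  have ls: "\<forall>i\<in>I. lin_space (sc i) (W i)" using lcs unfolding lcs_def by blast
  have \<iota>I: "\<iota> k \<in> I" for k using \<iota> SI by auto
  have xW: "x n i \<in> W i" if "i \<in> I" for n i using xV that unfolding sum_V_def prod_V_def by auto
  have "\<forall>k. \<exists>n. x n (\<iota> k) \<noteq> 0" using \<iota>(2) unfolding S_def by auto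
  then obtain nk where nk: "\<forall>k. x (nk k) (\<iota> k) \<noteq> 0" by metis
  have "\<forall>k. \<exists>q\<in>Q (\<iota> k). q (x (nk k) (\<iota> k)) \<noteq> 0"
  proof
    fix k
    show "\<exists>q\<in>Q (\<iota> k). q (x (nk k) (\<iota> k)) \<noteq> 0"
      using lcs \<iota>I[of k] xW[OF \<iota>I[of k], of "nk k"] nk unfolding lcs_def by blast
  qed
  then obtain qk where qk: "\<forall>k. qk k \<in> Q (\<iota> k) \<and> qk k (x (nk k) (\<iota> k)) \<noteq> 0" by metis
  have lcsk: "lcs (sc (\<iota> k)) (W (\<iota> k)) (Q (\<iota> k))" for k using lcs \<iota>I by blast
  have zq: "qk k 0 = 0" for k using lcs_zero[OF lcsk] qk by blast
  have nnq: "qk k v \<ge> 0" if "v \<in> W (\<iota> k)" for k v using lcs_nonneg[OF lcsk] qk that by blast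
  have snq: "seminorm_on (sc (\<iota> k)) (W (\<iota> k)) (qk k)" for k using lcsk qk unfolding lcs_def by blast
  define a where "a k = qk k (x (nk k) (\<iota> k))" for k
  have apos: "a k > 0" for k using nnq[OF xW[OF \<iota>I]] qk unfolding a_def
    by (metis less_eq_real_def)
  define cc where "cc k = real k / a k" for k
  have cc0: "cc k \<ge> 0" for k unfolding cc_def using apos[of k] by simp
  have cca: "cc k * a k = real k" for k unfolding cc_def using apos[of k] by simp
  define \<Phi> where "\<Phi> y = (\<Sum>k\<in>{k. y (\<iota> k) \<noteq> 0}. cc k * qk k (y (\<iota> k)))" for y :: "'i \<Rightarrow> 'b"
  have fin: "finite {k. y (\<iota> k) \<noteq> 0}" if "y \<in> sum_V I W" for y
  proof -
    have "finite {i. y i \<noteq> 0}" using that unfolding sum_V_def by auto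
    then have "finite (\<iota> -` {i. y i \<noteq> 0})" using \<iota>(1) by (intro finite_vimageI) auto
    then show ?thesis by (simp add: vimage_def)
  qed
  have ext: "\<Phi> y = (\<Sum>k\<in>K. cc k * qk k (y (\<iota> k)))"
    if "finite K" "{k. y (\<iota> k) \<noteq> 0} \<subseteq> K" for y K
    unfolding \<Phi>_def by (rule sum.mono_neutral_left) (use that zq in auto)
  have VL: "lin_space (fam_sc I sc) (sum_V I W)" using sumV_ls[OF ls] .
  have sn: "seminorm_on (fam_sc I sc) (sum_V I W) \<Phi>"
    unfolding seminorm_on_def
  proof (intro conjI ballI allI)
    fix y z assume y: "y \<in> sum_V I W" and z: "z \<in> sum_V I W"
    define K where "K = {k. y (\<iota> k) \<noteq> 0} \<union> {k. z (\<iota> k) \<noteq> 0}"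
    have K: "finite K" using fin y z unfolding K_def by blast
    have yz: "y + z \<in> sum_V I W" using VL y z unfolding lin_space_def by blast
    have "\<Phi> (y + z) = (\<Sum>k\<in>K. cc k * qk k ((y + z) (\<iota> k)))"
      by (rule ext[OF K]) (auto simp: K_def)
    also have "\<dots> \<le> (\<Sum>k\<in>K. cc k * qk k (y (\<iota> k)) + cc k * qk k (z (\<iota> k)))"
    proof (rule sum_mono)
      fix k assume "k \<in> K"
      have "qk k (y (\<iota> k) + z (\<iota> k)) \<le> qk k (y (\<iota> k)) + qk k (z (\<iota> k))"
        using snq[of k] xW y z \<iota>I[of k] unfolding seminorm_on_def sum_V_def prod_V_def by auto
      then have "cc k * qk k (y (\<iota> k) + z (\<iota> k)) \<le> cc k * (qk k (y (\<iota> k)) + qk k (z (\<iota> k)))"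
        using cc0[of k] by (rule mult_left_mono)
      then show "cc k * qk k ((y + z) (\<iota> k)) \<le> cc k * qk k (y (\<iota> k)) + cc k * qk k (z (\<iota> k))"
        by (simp add: algebra_simps)
    qed
    also have "\<dots> = \<Phi> y + \<Phi> z"
      by (simp add: sum.distrib ext[OF K, of y] ext[OF K, of z] K_def)
    finally show "\<Phi> (y + z) \<le> \<Phi> y + \<Phi> z" .
  next
    fix c y assume y: "y \<in> sum_V I W"
    define K where "K = {k. y (\<iota> k) \<noteq> 0}"
    have K: "finite K" using fin y unfolding K_def by blast
    have e1: "fam_sc I sc c y (\<iota> k) = sc (\<iota> k) c (y (\<iota> k))" for k
      using \<iota>I unfolding fam_sc_def by simp
    have sub: "{k. fam_sc I sc c y (\<iota> k) \<noteq> 0} \<subseteq> K"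
      unfolding K_def e1 using ls_sc_zero ls \<iota>I by fastforce
    have "\<Phi> (fam_sc I sc c y) = (\<Sum>k\<in>K. cc k * qk k (sc (\<iota> k) c (y (\<iota> k))))"
      unfolding ext[OF K sub] e1 ..
    also have "\<dots> = (\<Sum>k\<in>K. norm c * (cc k * qk k (y (\<iota> k))))"
    proof (rule sum.cong)
      fix k assume "k \<in> K"
      have "qk k (sc (\<iota> k) c (y (\<iota> k))) = norm c * qk k (y (\<iota> k))"
        using snq[of k] \<iota>I[of k] y unfolding seminorm_on_def sum_V_def prod_V_def by auto
      then show "cc k * qk k (sc (\<iota> k) c (y (\<iota> k))) = norm c * (cc k * qk k (y (\<iota> k)))" by simp
    qed simp
    also have "\<dots> = norm c * \<Phi> y" unfolding \<Phi>_def K_def by (simp add: sum_distrib_left)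
    finally show "\<Phi> (fam_sc I sc c y) = norm c * \<Phi> y" .
  qed
  have dom: "\<forall>i\<in>I. \<exists>F C. F \<subseteq> Q i \<and> finite F \<and> (\<forall>v\<in>W i. \<Phi> (inj_sum i v) \<le> C * (\<Sum>p\<in>F. p v))"
  proof
    fix i assume i: "i \<in> I"
    show "\<exists>F C. F \<subseteq> Q i \<and> finite F \<and> (\<forall>v\<in>W i. \<Phi> (inj_sum i v) \<le> C * (\<Sum>p\<in>F. p v))"
    proof (cases "i \<in> range \<iota>")
      case True
      then obtain k0 where k0: "i = \<iota> k0" by blast
      have "\<forall>v\<in>W i. \<Phi> (inj_sum i v) \<le> cc k0 * (\<Sum>p\<in>{qk k0}. p v)"
      proof
        fix v assume v: "v \<in> W i"
        have sub: "{k. inj_sum i v (\<iota> k) \<noteq> 0} \<subseteq> {k0}"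
          using \<iota>(1) k0 unfolding inj_sum_def inj_def by auto
        have "\<Phi> (inj_sum i v) = (\<Sum>k\<in>{k0}. cc k * qk k (inj_sum i v (\<iota> k)))"
          by (rule ext[OF _ sub]) simp
        then show "\<Phi> (inj_sum i v) \<le> cc k0 * (\<Sum>p\<in>{qk k0}. p v)" using k0 by (simp add: inj_sum_def)
      qed
      then show ?thesis using qk k0 by (intro exI[of _ "{qk k0}"] exI[of _ "cc k0"]) auto
    next
      case False
      have "\<forall>v\<in>W i. \<Phi> (inj_sum i v) \<le> 0 * (\<Sum>p\<in>{}. p v)"
      proof
        fix v assume v: "v \<in> W i"
        have "{k. inj_sum i v (\<iota> k) \<noteq> 0} = {}" using False unfolding inj_sum_def by auto
        then show "\<Phi> (inj_sum i v) \<le> 0 * (\<Sum>p\<in>{}. p v)" unfolding \<Phi>_def by simp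
      qed
      then show ?thesis by (intro exI[of _ "{}"] exI[of _ 0]) auto
    qed
  qed
  have \<Phi>P: "\<Phi> \<in> sum_P I sc W Q" unfolding sum_P_def using sn dom by blast
  have "bdd_above (\<Phi> ` range x)" using bspec[OF bd[unfolded lcs_bounded_def] \<Phi>P] .
  then obtain B where B: "\<forall>n. \<Phi> (x n) \<le> B" unfolding bdd_above_def by auto
  have low: "real k \<le> \<Phi> (x (nk k))" for k
  proof -
    have kin: "k \<in> {j. x (nk k) (\<iota> j) \<noteq> 0}" using nk by simp
    have "real k = cc k * qk k (x (nk k) (\<iota> k))" using cca unfolding a_def by simp
    also have "\<dots> \<le> \<Phi> (x (nk k))" unfolding \<Phi>_def
    proof (rule member_le_sum[OF kin])
      fix j assume "j \<in> {j. x (nk k) (\<iota> j) \<noteq> 0} - {k}"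
      show "0 \<le> cc j * qk j (x (nk k) (\<iota> j))" using cc0 nnq[OF xW[OF \<iota>I]] by simp
    next
      show "finite {j. x (nk k) (\<iota> j) \<noteq> 0}" using fin xV by blast
    qed
    finally show ?thesis .
  qed
  define k where "k = nat \<lceil>B\<rceil> + 1"
  have "real k > B" unfolding k_def by linarith
  then show False using low[of k] B by (metis not_le order_trans)
qed


lemma sum_back:
  fixes W :: "'i \<Rightarrow> 'b::ab_group_add set" and sc :: "'i \<Rightarrow> 'k::real_normed_field \<Rightarrow> 'b \<Rightarrow> 'b"
    and Q :: "'i \<Rightarrow> ('b \<Rightarrow> real) set"
  assumes p: "1 \<le> p" and lcs: "\<forall>i\<in>I. lcs (sc i) (W i) (Q i)" and w: "\<forall>i\<in>I. wCSP p (sc i) (W i) (Q i)"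
  shows "wCSP p (fam_sc I sc) (sum_V I W) (sum_P I sc W Q)"
  unfolding wCSP_def
proof (intro allI impI)
  fix x :: "nat \<Rightarrow> 'i \<Rightarrow> 'b"
  assume x: "(\<forall>n. x n \<in> sum_V I W) \<and> lcs_bounded (sum_P I sc W Q) (range x)"
  obtain J where J: "finite J" "J \<subseteq> I" "\<forall>n i. i \<notin> J \<longrightarrow> x n i = 0"
    using sum_support[OF lcs conjunct1[OF x] conjunct2[OF x]] by blast
  have ls: "\<forall>i\<in>I. lin_space (sc i) (W i)" using lcs unfolding lcs_def by blast
  have VL: "lin_space (fam_sc I sc) (sum_V I W)" using sumV_ls[OF ls] .
  have xi: "x n i \<in> W i" if "i \<in> I" for n i using x that unfolding sum_V_def prod_V_def by auto
  have bi: "lcs_bounded (Q i) (range (\<lambda>n. x (s n) i))" if i: "i \<in> I" for i and s :: "nat \<Rightarrow> nat"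
    unfolding lcs_bounded_def
  proof
    fix q assume q: "q \<in> Q i"
    have sq: "seminorm_on (sc i) (W i) q" using lcs i q unfolding lcs_def by blast
    have "\<exists>F C. F \<subseteq> Q i \<and> finite F \<and> (\<forall>v\<in>W i. q v \<le> C * (\<Sum>p\<in>F. p v))"
      using q by (intro exI[of _ "{q}"] exI[of _ 1]) auto
    then have mem: "(\<lambda>y. q (y i)) \<in> sum_P I sc W Q" using sumP_coord[OF lcs i sq] by blast
    have B: "\<forall>q\<in>sum_P I sc W Q. bdd_above (q ` range x)" using conjunct2[OF x] unfolding lcs_bounded_def .
    have "bdd_above ((\<lambda>y. q (y i)) ` range x)" using bspec[OF B mem] .
    then obtain b where "\<forall>n. q (x n i) \<le> b" unfolding bdd_above_def by auto
    then show "bdd_above (q ` range (\<lambda>n. x (s n) i))" unfolding bdd_above_def by auto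
  qed
  define Pd where "Pd i s \<longleftrightarrow> weakly_p_Cauchy p (sc i) (W i) (Q i) (\<lambda>n. x (s n) i)" for i s
  have ex: "\<forall>j\<in>J. \<forall>s::nat\<Rightarrow>nat. strict_mono s \<longrightarrow> (\<exists>r. strict_mono r \<and> Pd j (s \<circ> r))"
  proof (intro ballI allI impI)
    fix n and s :: "nat \<Rightarrow> nat" assume n: "n \<in> J" and "strict_mono s"
    have nI: "n \<in> I" using n J by blast
    have wn: "wCSP p (sc n) (W n) (Q n)" using w nI by blast
    have "\<exists>r'. strict_mono r' \<and> weakly_p_Cauchy p (sc n) (W n) (Q n) ((\<lambda>m. x (s m) n) \<circ> r')"
      using wn[unfolded wCSP_def, rule_format, of "\<lambda>m. x (s m) n"] xi[OF nI] bi[OF nI, of s] by blast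
    then obtain r' where "strict_mono r'" "weakly_p_Cauchy p (sc n) (W n) (Q n) ((\<lambda>m. x (s m) n) \<circ> r')"
      by blast
    then show "\<exists>r'. strict_mono r' \<and> Pd n (s \<circ> r')" unfolding Pd_def o_def by auto
  qed
  have stable: "Pd n (s \<circ> r)" if "Pd n s" "strict_mono r" for r s n
    using wpC_subseq[OF that(1)[unfolded Pd_def] that(2)] unfolding Pd_def by (simp add: o_def)
  obtain r where r: "strict_mono r" "\<forall>j\<in>J. Pd j r" using fin_subseq[OF J(1) ex stable] by blast
  have nnB: "\<forall>q\<in>sum_P I sc W Q. \<forall>y\<in>sum_V I W. q y \<ge> 0"
    using sn_nonneg[OF VL] unfolding sum_P_def by blast
  have "weakly_p_Cauchy p (fam_sc I sc) (sum_V I W) (sum_P I sc W Q) (x \<circ> r)"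
    unfolding weakly_p_Cauchy_def weakly_p_summable_def
  proof (intro allI impI conjI ballI)
    fix k l :: "nat \<Rightarrow> nat" and n
    show "(x \<circ> r) (k n) - (x \<circ> r) (l n) \<in> sum_V I W"
      using sumV_diff[OF ls] x by auto
  next
    fix k l :: "nat \<Rightarrow> nat" and f
    assume kl: "strict_mono k \<and> strict_mono l"
      and f: "f \<in> dual (fam_sc I sc) (sum_V I W) (sum_P I sc W Q)"
    define d where "d n = x (r (k n)) - x (r (l n))" for n
    have dV: "d n \<in> sum_V I W" for n using sumV_diff[OF ls] x unfolding d_def by auto
    have dec: "\<forall>y\<in>sum_V I W. f y = (\<Sum>j\<in>J. f (inj_sum j (y j))) + f (\<lambda>i. if i \<in> J then 0 else y i)"
      by (rule decomp[OF _ _ _ J(1)]) (use dual_add[OF f] sumV_inj[OF ls] sumV_restr[OF ls] in blast)+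
    have rz: "(\<lambda>i. if i \<in> J then 0 else d n i) = 0" for n
      using J(3) unfolding d_def by (auto simp: fun_eq_iff)
    have f0: "f 0 = 0" using dual_zero[OF f VL] .
    have gj: "(\<lambda>v. f (inj_sum j v)) \<in> dual (sc j) (W j) (Q j)" if jI: "j \<in> I" for j
    proof (rule comp_dual[OF f, where e = "inj_sum j" and W = "W j" and sc = "sc j" and Q = "Q j"])
      show "\<forall>v\<in>W j. inj_sum j v \<in> sum_V I W" using sumV_inj'[OF ls jI] by blast
      show "\<forall>v\<in>W j. \<forall>w\<in>W j. inj_sum j (v + w) = inj_sum j v + inj_sum j w"
        by (auto simp: inj_sum_def fun_eq_iff)
      show "\<forall>c. \<forall>v\<in>W j. fam_sc I sc c (inj_sum j v) = inj_sum j (sc j c v)"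
        using fam_sc_inj[OF ls jI] by blast
      show "lin_space (sc j) (W j)" using ls jI by blast
      show "\<forall>q\<in>sum_P I sc W Q. \<forall>x\<in>sum_V I W. 0 \<le> q x" using nnB .
      show "\<forall>q\<in>Q j. \<forall>v\<in>W j. 0 \<le> q v" using lcs lcs_nonneg jI by blast
      show "\<forall>q\<in>sum_P I sc W Q. \<exists>F C. F \<subseteq> Q j \<and> finite F \<and> (\<forall>v\<in>W j. q (inj_sum j v) \<le> C * sum (\<lambda>p. p v) F)"
        using jI unfolding sum_P_def by blast
    qed
    have "in_lp p (\<lambda>n. \<Sum>j\<in>J. f (inj_sum j (d n j)))"
    proof (rule in_lp_sum[OF p J(1)], rule ballI)
      fix j assume jJ: "j \<in> J"
      then have jI: "j \<in> I" using J by blast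
      have "weakly_p_Cauchy p (sc j) (W j) (Q j) (\<lambda>n. x (r n) j)" using r jJ unfolding Pd_def by blast
      then have ws: "weakly_p_summable p (sc j) (W j) (Q j) (\<lambda>n. x (r (k n)) j - x (r (l n)) j)"
        using kl unfolding weakly_p_Cauchy_def by blast
      have "in_lp p (\<lambda>n. f (inj_sum j (x (r (k n)) j - x (r (l n)) j)))"
        using bspec[OF conjunct2[OF ws[unfolded weakly_p_summable_def]] gj[OF jI]] by simp
      then show "in_lp p (\<lambda>n. f (inj_sum j (d n j)))" unfolding d_def by simp
    qed
    moreover have "f (d n) = (\<Sum>j\<in>J. f (inj_sum j (d n j)))" for n
      using dec dV[of n] rz[of n] f0 by simp
    ultimately show "in_lp p (\<lambda>n. f ((x \<circ> r) (k n) - (x \<circ> r) (l n)))"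
      unfolding d_def by simp
  qed
  then show "\<exists>r. strict_mono r \<and> weakly_p_Cauchy p (fam_sc I sc) (sum_V I W) (sum_P I sc W Q) (x \<circ> r)"
    using r(1) by blast
qed

theorem propositionp:
  fixes p :: ereal
  assumes "1 \<le> p"
  shows
   "(\<forall>(V :: nat \<Rightarrow> 'a::ab_group_add set) (sc :: nat \<Rightarrow> 'k::{real_normed_field,euclidean_space} \<Rightarrow> 'a \<Rightarrow> 'a) P.
       (\<forall>i. lcs (sc i) (V i) (P i)) \<longrightarrow>
       (wCSP p (fam_sc UNIV sc) (prod_V UNIV V) (prod_P UNIV P) \<longleftrightarrow> (\<forall>i. wCSP p (sc i) (V i) (P i))))
    \<and> (\<forall>(I :: 'i set) (W :: 'i \<Rightarrow> 'b::ab_group_add set) (sc' :: 'i \<Rightarrow> 'k \<Rightarrow> 'b \<Rightarrow> 'b) Q.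
       I \<noteq> {} \<and> (\<forall>i\<in>I. lcs (sc' i) (W i) (Q i)) \<longrightarrow>
       (wCSP p (fam_sc I sc') (sum_V I W) (sum_P I sc' W Q) \<longleftrightarrow> (\<forall>i\<in>I. wCSP p (sc' i) (W i) (Q i))))"
proof (intro conjI allI impI iffI)
  fix V :: "nat \<Rightarrow> 'a set" and sc :: "nat \<Rightarrow> 'k \<Rightarrow> 'a \<Rightarrow> 'a" and P
  assume lcs: "\<forall>i. lcs (sc i) (V i) (P i)"
  have lsU: "\<forall>i\<in>UNIV. lin_space (sc i) (V i)" using lcs unfolding lcs_def by blast
  {
    assume big: "wCSP p (fam_sc UNIV sc) (prod_V UNIV V) (prod_P UNIV P)"
    fix i
    show "wCSP p (sc i) (V i) (P i)"
    proof (rule wCSP_component[OF big])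
      show "lin_space (sc i) (V i)" using lsU by blast
      show "\<forall>v\<in>V i. inj_sum i v \<in> prod_V UNIV V" using prodV_inj'[OF lsU] by blast
      show "lcs_bounded (prod_P UNIV P) (range (\<lambda>n. inj_sum i (x n)))"
        if "\<forall>n. x n \<in> V i" "lcs_bounded (P i) (range x)" for x
        using prod_bnd[OF lcs that] .
      show "\<forall>f\<in>dual (sc i) (V i) (P i). (\<lambda>y. f (y i)) \<in> dual (fam_sc UNIV sc) (prod_V UNIV V) (prod_P UNIV P)"
        using prod_proj by blast
    qed
  }
  {
    assume "\<forall>i. wCSP p (sc i) (V i) (P i)"
    then show "wCSP p (fam_sc UNIV sc) (prod_V UNIV V) (prod_P UNIV P)"
      using prod_back[OF assms lcs] by blast
  }
next
  fix I :: "'i set" and W :: "'i \<Rightarrow> 'b set" and sc' :: "'i \<Rightarrow> 'k \<Rightarrow> 'b \<Rightarrow> 'b" and Q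
  assume h: "I \<noteq> {} \<and> (\<forall>i\<in>I. lcs (sc' i) (W i) (Q i))"
  then have lcs: "\<forall>i\<in>I. lcs (sc' i) (W i) (Q i)" by blast
  have ls: "\<forall>i\<in>I. lin_space (sc' i) (W i)" using lcs unfolding lcs_def by blast
  {
    assume big: "wCSP p (fam_sc I sc') (sum_V I W) (sum_P I sc' W Q)"
    show "\<forall>i\<in>I. wCSP p (sc' i) (W i) (Q i)"
    proof
      fix i assume i: "i \<in> I"
      show "wCSP p (sc' i) (W i) (Q i)"
      proof (rule wCSP_component[OF big])
        show "lin_space (sc' i) (W i)" using ls i by blast
        show "\<forall>v\<in>W i. inj_sum i v \<in> sum_V I W" using sumV_inj'[OF ls i] by blast
        show "lcs_bounded (sum_P I sc' W Q) (range (\<lambda>n. inj_sum i (x n)))"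
          if "\<forall>n. x n \<in> W i" "lcs_bounded (Q i) (range x)" for x
          using sum_bnd[OF lcs i that] .
        show "\<forall>f\<in>dual (sc' i) (W i) (Q i). (\<lambda>y. f (y i)) \<in> dual (fam_sc I sc') (sum_V I W) (sum_P I sc' W Q)"
          using sum_proj[OF lcs i] by blast
      qed
    qed
  }
  {
    assume "\<forall>i\<in>I. wCSP p (sc' i) (W i) (Q i)"
    then show "wCSP p (fam_sc I sc') (sum_V I W) (sum_P I sc' W Q)"
      using sum_back[OF assms lcs] by blast
  }
qed

end
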